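(* Let $p$ be an odd prime. If $G$ is a quasi-powerful $p$-group then $G^{p}$ is powerful.
   Context: For an odd prime $p$, a finite $p$-group $G$ is powerful if $[G,G]\le G^{p}$, where $G^{p}=\langle g^{p}\mid g\in G\rangle$, and $G$ is quasi-powerful if $G/Z(G)$ is powerful. *)

theory Defs
  imports "HOL-Algebra.Algebra"
begin

definition center :: "('a, 'b) monoid_scheme \<Rightarrow> 'a set" where
  "center G = {z \<in> carrier G. \<forall>g \<in> carrier G. z \<otimes>\<^bsub>G\<^esub> g = g \<otimes>\<^bsub>G\<^esub> z}"

definition pth_powers :: "('a, 'b) monoid_scheme \<Rightarrow> nat \<Rightarrow> 'a set" where
  "pth_powers G p = generate G {g [^]\<^bsub>G\<^esub> p | g. g \<in> carrier G}"

definition p_group :: "('a, 'b) monoid_scheme \<Rightarrow> nat \<Rightarrow> bool" where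
  "p_group G p \<longleftrightarrow> group G \<and> finite (carrier G) \<and> (\<exists>n. order G = p ^ n)"

definition powerful :: "('a, 'b) monoid_scheme \<Rightarrow> nat \<Rightarrow> bool" where
  "powerful G p \<longleftrightarrow> derived G (carrier G) \<subseteq> pth_powers G p"

definition quasi_powerful :: "('a, 'b) monoid_scheme \<Rightarrow> nat \<Rightarrow> bool" where
  "quasi_powerful G p \<longleftrightarrow> powerful (G Mod (center G)) p"

end

theory Submission
  imports Defs
begin
definition gcomm :: "('a,'b) monoid_scheme \<Rightarrow> 'a \<Rightarrow> 'a \<Rightarrow> 'a" where
  "gcomm G a b = inv\<^bsub>G\<^esub> a \<otimes>\<^bsub>G\<^esub> inv\<^bsub>G\<^esub> b \<otimes>\<^bsub>G\<^esub> a \<otimes>\<^bsub>G\<^esub> b"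
context group begin
lemma cancel1[simp]: "x \<in> carrier G \<Longrightarrow> y \<in> carrier G \<Longrightarrow> inv x \<otimes> (x \<otimes> y) = y"
  by (simp add: m_assoc[symmetric])
lemma cancel2[simp]: "x \<in> carrier G \<Longrightarrow> y \<in> carrier G \<Longrightarrow> x \<otimes> (inv x \<otimes> y) = y"
  by (simp add: m_assoc[symmetric])
lemma gcomm_closed[simp]: "a \<in> carrier G \<Longrightarrow> b \<in> carrier G \<Longrightarrow> gcomm G a b \<in> carrier G"
  by (simp add: gcomm_def)
lemma gcomm_conj: "a \<in> carrier G \<Longrightarrow> b \<in> carrier G \<Longrightarrow> c \<in> carrier G \<Longrightarrow>
  c \<otimes> gcomm G a b \<otimes> inv c = gcomm G (c \<otimes> a \<otimes> inv c) (c \<otimes> b \<otimes> inv c)"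
  by (simp add: gcomm_def m_assoc inv_mult_group)
lemma conj_pow: "a \<in> carrier G \<Longrightarrow> c \<in> carrier G \<Longrightarrow> (c \<otimes> a \<otimes> inv c) [^] (k::nat) = c \<otimes> a [^] k \<otimes> inv c"
proof (induction k)
  case 0 then show ?case by simp
next
  case (Suc k) then show ?case by (simp add: m_assoc)
qed
end

context group begin
lemma comm_pow_l: assumes "U \<in> carrier G" "W \<in> carrier G" "U \<otimes> W = W \<otimes> U"
  shows "U \<otimes> W [^] (k::nat) = W [^] k \<otimes> U"
proof (induction k)
  case 0 then show ?case using assms by simp
next
  case (Suc k)
  have "U \<otimes> W [^] Suc k = (U \<otimes> W [^] k) \<otimes> W" using assms by (simp add: m_assoc)
  also have "\<dots> = W [^] k \<otimes> (U \<otimes> W)" using assms Suc by (simp add: m_assoc)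
  also have "\<dots> = W [^] Suc k \<otimes> U" using assms by (simp add: m_assoc nat_pow_mult)
  finally show ?case .
qed

lemma collect_aux: assumes XYC: "U \<in> carrier G" "V \<in> carrier G" "W \<in> carrier G"
  and e: "V \<otimes> U = U \<otimes> V \<otimes> W" and cx: "W \<otimes> U = U \<otimes> W" and cy: "W \<otimes> V = V \<otimes> W"
  shows "V [^] (k::nat) \<otimes> U = U \<otimes> V [^] k \<otimes> W [^] k"
proof (induction k)
  case 0 then show ?case using assms by simp
next
  case (Suc k)
  have "V [^] Suc k \<otimes> U = V [^] k \<otimes> (V \<otimes> U)" using assms by (simp add: m_assoc)
  also have "\<dots> = (V [^] k \<otimes> U) \<otimes> V \<otimes> W" using assms e by (simp add: m_assoc)
  also have "\<dots> = U \<otimes> V [^] k \<otimes> (W [^] k \<otimes> V) \<otimes> W" using assms Suc by (simp add: m_assoc)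
  also have "\<dots> = U \<otimes> V [^] k \<otimes> (V \<otimes> W [^] k) \<otimes> W" using assms comm_pow_l[of V W k] cy by simp
  also have "\<dots> = U \<otimes> V [^] Suc k \<otimes> W [^] Suc k" using assms by (simp add: m_assoc nat_pow_mult)
  finally show ?case .
qed

lemma collect: assumes XYC: "U \<in> carrier G" "V \<in> carrier G" "W \<in> carrier G"
  and e: "V \<otimes> U = U \<otimes> V \<otimes> W" and cx: "W \<otimes> U = U \<otimes> W" and cy: "W \<otimes> V = V \<otimes> W"
  shows "(U \<otimes> V) [^] (k::nat) = U [^] k \<otimes> V [^] k \<otimes> W [^] (\<Sum>i<k. i)"
proof (induction k)
  case 0 then show ?case using assms by simp
next
  case (Suc k)
  have "(U \<otimes> V) [^] Suc k = U [^] k \<otimes> (V [^] k \<otimes> (W [^] (\<Sum>i<k. i) \<otimes> U)) \<otimes> V"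
    using assms Suc by (simp add: m_assoc)
  also have "\<dots> = U [^] k \<otimes> (V [^] k \<otimes> U) \<otimes> W [^] (\<Sum>i<k. i) \<otimes> V"
    using assms comm_pow_l[of U W "(\<Sum>i<k. i)"] cx by (simp add: m_assoc)
  also have "\<dots> = U [^] k \<otimes> U \<otimes> V [^] k \<otimes> W [^] k \<otimes> (W [^] (\<Sum>i<k. i) \<otimes> V)"
    using assms collect_aux[OF assms] by (simp add: m_assoc)
  also have "\<dots> = U [^] k \<otimes> U \<otimes> V [^] k \<otimes> W [^] k \<otimes> (V \<otimes> W [^] (\<Sum>i<k. i))"
    using assms comm_pow_l[of V W "(\<Sum>i<k. i)"] cy by simp
  also have "\<dots> = U [^] k \<otimes> U \<otimes> V [^] k \<otimes> (W [^] k \<otimes> V) \<otimes> W [^] (\<Sum>i<k. i)"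
    using assms by (simp add: m_assoc)
  also have "\<dots> = U [^] k \<otimes> U \<otimes> V [^] k \<otimes> (V \<otimes> W [^] k) \<otimes> W [^] (\<Sum>i<k. i)"
    using assms comm_pow_l[of V W k] cy by simp
  also have "\<dots> = U [^] Suc k \<otimes> V [^] Suc k \<otimes> W [^] (\<Sum>i<Suc k. i)"
    using assms by (simp add: m_assoc nat_pow_mult add.commute)
  finally show ?case .
qed

lemma conj_iter: assumes "U \<in> carrier G" "V \<in> carrier G" "W \<in> carrier G"
  and e: "inv V \<otimes> U \<otimes> V = U \<otimes> W" and ca: "W \<otimes> U = U \<otimes> W" and cb: "W \<otimes> V = V \<otimes> W"
  shows "inv (V [^] (k::nat)) \<otimes> U \<otimes> V [^] k = U \<otimes> W [^] k"
proof (induction k)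
  case 0 then show ?case using assms by simp
next
  case (Suc k)
  have "inv (V [^] Suc k) \<otimes> U \<otimes> V [^] Suc k = inv V \<otimes> (inv (V [^] k) \<otimes> U \<otimes> V [^] k) \<otimes> V"
    using assms by (simp add: m_assoc inv_mult_group)
  also have "\<dots> = inv V \<otimes> U \<otimes> (W [^] k \<otimes> V)" using assms Suc by (simp add: m_assoc)
  also have "\<dots> = inv V \<otimes> U \<otimes> (V \<otimes> W [^] k)" using assms comm_pow_l[of V W k] cb by (simp)
  also have "\<dots> = (inv V \<otimes> U \<otimes> V) \<otimes> W [^] k" using assms(1-3) by (simp add: m_assoc)
  also have "\<dots> = (U \<otimes> W) \<otimes> W [^] k" by (simp only: e)
  also have "\<dots> = U \<otimes> W [^] Suc k" using assms(1-3) by (metis m_assoc nat_pow_Suc nat_pow_Suc2 nat_pow_closed)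
  finally show ?case .
qed

lemma commute_iff_gcomm: "a \<in> carrier G \<Longrightarrow> b \<in> carrier G \<Longrightarrow> (gcomm G a b = \<one>) \<longleftrightarrow> a \<otimes> b = b \<otimes> a"
  unfolding gcomm_def
  by (metis (no_types, lifting) inv_closed inv_mult_group m_assoc m_closed inv_solve_left' r_one l_inv_ex inv_unique' )
end

context normal begin
lemma hc_carrier[simp]: "a \<in> carrier G \<Longrightarrow> H #> a \<in> carrier (G Mod H)"
  by (simp add: FactGroup_def RCOSETS_def) blast
lemma hc_mult[simp]: "a \<in> carrier G \<Longrightarrow> b \<in> carrier G \<Longrightarrow> (H #> a) <#> (H #> b) = H #> (a \<otimes> b)"
  by (simp add: rcos_sum)
lemma hc_one[simp]: "H #> \<one> = H"
  by (simp add: coset_mult_one subset)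
lemma hc_pow[simp]: "a \<in> carrier G \<Longrightarrow> (H #> a) [^]\<^bsub>G Mod H\<^esub> (k::nat) = H #> (a [^] k)"
  using FactGroup_pow by simp
lemma hc_inv[simp]: "a \<in> carrier G \<Longrightarrow> inv\<^bsub>G Mod H\<^esub> (H #> a) = H #> (inv a)"
  by (simp add: inv_FactGroup rcos_inv)
lemma hc_one_iff: "a \<in> carrier G \<Longrightarrow> (H #> a = H) \<longleftrightarrow> a \<in> H"
  using rcos_self[of a H] subgroup_axioms rcos_const[OF is_group] by auto
lemma hc_eq_iff: assumes "a \<in> carrier G" "b \<in> carrier G"
  shows "(H #> a = H #> b) \<longleftrightarrow> a \<otimes> inv b \<in> H"
proof
  assume "H #> a = H #> b"
  hence "(H #> a) \<otimes>\<^bsub>G Mod H\<^esub> (H #> inv b) = (H #> b) \<otimes>\<^bsub>G Mod H\<^esub> (H #> inv b)" by simp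
  hence "H #> (a \<otimes> inv b) = H #> (b \<otimes> inv b)" using assms by simp
  thus "a \<otimes> inv b \<in> H" using assms hc_one_iff by simp
next
  assume "a \<otimes> inv b \<in> H"
  hence "H #> (a \<otimes> inv b) = H" using assms hc_one_iff by simp
  hence "(H #> (a \<otimes> inv b)) <#> (H #> b) = H #> b"
    using assms hc_mult[of \<one> b] by simp
  thus "H #> a = H #> b" using assms by (simp add: m_assoc)
qed
lemma gcomm_mem_iff: assumes "a \<in> carrier G" "b \<in> carrier G"
  shows "gcomm G a b \<in> H \<longleftrightarrow> (H #> a) \<otimes>\<^bsub>G Mod H\<^esub> (H #> b) = (H #> b) \<otimes>\<^bsub>G Mod H\<^esub> (H #> a)"
proof -
  have "gcomm G a b \<in> H \<longleftrightarrow> H #> gcomm G a b = H" using assms hc_one_iff by simp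
  also have "H #> gcomm G a b = inv\<^bsub>G Mod H\<^esub> (H #> a) \<otimes>\<^bsub>G Mod H\<^esub> inv\<^bsub>G Mod H\<^esub> (H #> b) \<otimes>\<^bsub>G Mod H\<^esub> (H #> a) \<otimes>\<^bsub>G Mod H\<^esub> (H #> b)"
    using assms by (simp add: gcomm_def)
  also have "\<dots> = gcomm (G Mod H) (H #> a) (H #> b)" by (simp add: gcomm_def)
  finally show ?thesis using group.commute_iff_gcomm[OF factorgroup_is_group] assms
    by (metis hc_carrier one_FactGroup)
qed
end

context group begin
lemma commute_inv: assumes "a \<in> carrier G" "b \<in> carrier G" "a \<otimes> b = b \<otimes> a" shows "inv a \<otimes> b = b \<otimes> inv a"
proof -
  have "inv a \<otimes> b = inv a \<otimes> (b \<otimes> a) \<otimes> inv a" using assms(1,2) by (simp add: m_assoc)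
  also have "\<dots> = inv a \<otimes> (a \<otimes> b) \<otimes> inv a" using assms(3) by simp
  also have "\<dots> = b \<otimes> inv a" using assms(1,2) by (simp add: m_assoc)
  finally show ?thesis .
qed
lemma commute_mult: assumes "a1 \<in> carrier G" "a2 \<in> carrier G" "b \<in> carrier G" "a1 \<otimes> b = b \<otimes> a1" "a2 \<otimes> b = b \<otimes> a2"
  shows "(a1 \<otimes> a2) \<otimes> b = b \<otimes> (a1 \<otimes> a2)"
proof -
  have "(a1 \<otimes> a2) \<otimes> b = a1 \<otimes> (a2 \<otimes> b)" using assms(1-3) by (simp add: m_assoc)
  also have "\<dots> = (a1 \<otimes> b) \<otimes> a2" using assms(1-3,5) by (simp add: m_assoc)
  also have "\<dots> = b \<otimes> (a1 \<otimes> a2)" using assms(1-3,4) by (simp add: m_assoc)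
  finally show ?thesis .
qed
lemma commute_conj: assumes "h \<in> carrier G" "x \<in> carrier G" "h \<otimes> x = x \<otimes> h" shows "x \<otimes> h \<otimes> inv x = h"
proof -
  have "x \<otimes> h \<otimes> inv x = h \<otimes> x \<otimes> inv x" using assms(3) by simp
  thus ?thesis using assms(1,2) by (simp add: m_assoc)
qed
end
context normal begin
lemma gcomm_mem_sym: "a \<in> carrier G \<Longrightarrow> b \<in> carrier G \<Longrightarrow> gcomm G a b \<in> H \<longleftrightarrow> gcomm G b a \<in> H"
  by (simp add: gcomm_mem_iff) (rule eq_commute)

lemma cent_subgroup: assumes b: "b \<in> carrier G"
  shows "subgroup {a \<in> carrier G. gcomm G a b \<in> H} G"
proof -
  have iff: "\<And>a. a \<in> carrier G \<Longrightarrow> gcomm G a b \<in> H \<longleftrightarrow> (H #> a) <#> (H #> b) = (H #> b) <#> (H #> a)"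
    using gcomm_mem_iff b by simp
  show ?thesis
  proof (rule subgroupI)
    show "{a \<in> carrier G. gcomm G a b \<in> H} \<subseteq> carrier G" by blast
    have "gcomm G \<one> b = \<one>" using b by (simp add: gcomm_def)
    thus "{a \<in> carrier G. gcomm G a b \<in> H} \<noteq> {}" using b by auto
  next
    fix a assume a: "a \<in> {a \<in> carrier G. gcomm G a b \<in> H}"
    hence e: "(H #> a) <#> (H #> b) = (H #> b) <#> (H #> a)" using iff by blast
    have "(H #> inv a) <#> (H #> b) = (H #> b) <#> (H #> inv a)"
      using group.commute_inv[OF factorgroup_is_group, of "H #> a" "H #> b"] e a b by simp
    thus "inv a \<in> {a \<in> carrier G. gcomm G a b \<in> H}" using iff a by auto
  next
    fix a1 a2 assume a1: "a1 \<in> {a \<in> carrier G. gcomm G a b \<in> H}" and a2: "a2 \<in> {a \<in> carrier G. gcomm G a b \<in> H}"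
    hence e1: "(H #> a1) <#> (H #> b) = (H #> b) <#> (H #> a1)"
      and e2: "(H #> a2) <#> (H #> b) = (H #> b) <#> (H #> a2)" using iff by blast+
    have "(H #> (a1 \<otimes> a2)) <#> (H #> b) = (H #> b) <#> (H #> (a1 \<otimes> a2))"
      using group.commute_mult[OF factorgroup_is_group, of "H #> a1" "H #> a2" "H #> b"] e1 e2 a1 a2 b by simp
    thus "a1 \<otimes> a2 \<in> {a \<in> carrier G. gcomm G a b \<in> H}" using iff a1 a2 by auto
  qed
qed

lemma zeta_normal: "{a \<in> carrier G. \<forall>g\<in>carrier G. gcomm G a g \<in> H} \<lhd> G"
proof -
  let ?S = "{a \<in> carrier G. \<forall>g\<in>carrier G. gcomm G a g \<in> H}"
  have eq: "?S = carrier G \<inter> (\<Inter>g\<in>carrier G. {a \<in> carrier G. gcomm G a g \<in> H})" by auto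
  have sub: "subgroup ?S G"
    unfolding eq
    by (rule subgroups_Inter_pair[OF subgroup_self subgroups_Inter]) (use cent_subgroup in auto)
  show ?thesis
    unfolding normal_inv_iff
  proof (intro conjI sub ballI)
    fix x h assume x: "x \<in> carrier G" and h: "h \<in> ?S"
    have hc: "\<And>g. g \<in> carrier G \<Longrightarrow> (H #> h) <#> (H #> g) = (H #> g) <#> (H #> h)"
      using h gcomm_mem_iff by auto
    have "x \<otimes> h \<otimes> inv x \<in> carrier G" using x h by auto
    moreover have "gcomm G (x \<otimes> h \<otimes> inv x) g \<in> H" if g: "g \<in> carrier G" for g
    proof -
      have e: "H #> (x \<otimes> h \<otimes> inv x) = H #> h"
        using group.commute_conj[OF factorgroup_is_group, of "H #> h" "H #> x"] hc[OF x] x h by simp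
      show ?thesis using gcomm_mem_iff[of "x \<otimes> h \<otimes> inv x" g] e hc[OF g] x h g by simp
    qed
    ultimately show "x \<otimes> h \<otimes> inv x \<in> ?S" by blast
  qed
qed
end

locale pgrp = group +
  fixes p n :: nat
  assumes prime_p: "Factorial_Ring.prime p" and fin: "finite (carrier G)" and ordG: "order G = p ^ n"
begin

lemma dvd_ord_pow: "d dvd order G \<Longrightarrow> \<exists>i. d = p ^ i"
  using divides_primepow_nat[OF prime_p] ordG by auto

lemma sub_card: assumes "subgroup H G" shows "\<exists>i. card H = p ^ i"
proof -
  have "card H dvd order G" unfolding lagrange[OF assms, symmetric] by simp
  thus ?thesis using dvd_ord_pow by blast
qed

lemma orbit_count:
  assumes act: "group_action G E \<phi>"
  shows "finite Y \<Longrightarrow> Y \<subseteq> E \<Longrightarrow> (\<forall>y\<in>Y. orbit G \<phi> y \<subseteq> Y) \<Longrightarrow> (\<forall>y\<in>Y. orbit G \<phi> y \<noteq> {y}) \<Longrightarrow> p dvd card Y"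
proof (induction "card Y" arbitrary: Y rule: less_induct)
  case less
  interpret A: group_action G E \<phi> by (rule act)
  show ?case
  proof (cases "Y = {}")
    case True then show ?thesis by simp
  next
    case False
    then obtain y where y: "y \<in> Y" by blast
    let ?O = "orbit G \<phi> y"
    have yE: "y \<in> E" using y less by auto
    have OY: "?O \<subseteq> Y" using less y by auto
    have yO: "y \<in> ?O" using A.orbit_refl[OF yE] .
    have "card ?O dvd order G" unfolding A.orbit_stabilizer_theorem[OF yE, symmetric] by simp
    then obtain k where k: "card ?O = p ^ k" using dvd_ord_pow by blast
    have finO: "finite ?O" using OY less(2) finite_subset by blast
    have "k \<noteq> 0"
    proof
      assume "k = 0"
      hence "card ?O = 1" using k by simp
      then obtain z where "?O = {z}" using card_1_singletonE by blast
      hence "?O = {y}" using yO by auto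
      thus False using less(5) y by blast
    qed
    hence pO: "p dvd card ?O" using k by simp
    let ?Y = "Y - ?O"
    have inv: "\<forall>z\<in>?Y. orbit G \<phi> z \<subseteq> ?Y"
    proof (intro ballI subsetI)
      fix z w assume z: "z \<in> ?Y" and w: "w \<in> orbit G \<phi> z"
      have zE: "z \<in> E" using z less by auto
      have wY: "w \<in> Y" using w z less by auto
      have wE: "w \<in> E" using wY less by auto
      show "w \<in> ?Y"
      proof
        show "w \<in> Y" by (rule wY)
        show "w \<notin> ?O"
        proof
          assume "w \<in> ?O"
          have "z \<in> orbit G \<phi> w" using A.orbit_sym[OF zE wE w] .
          hence "z \<in> ?O" using A.orbit_trans[OF yE wE zE \<open>w \<in> ?O\<close>] by blast
          thus False using z by blast
        qed
      qed
    qed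
    have "?Y \<subset> Y" using y yO by blast
    hence lt: "card ?Y < card Y" by (rule psubset_card_mono[OF less(2)])
    have "finite ?Y" using less(2) by blast
    moreover have "?Y \<subseteq> E" using less(3) by blast
    moreover have "\<forall>y\<in>?Y. orbit G \<phi> y \<noteq> {y}" using less(5) by blast
    ultimately have "p dvd card ?Y" using less(1)[OF lt] inv by blast
    moreover have "card ?Y = card Y - card ?O" by (rule card_Diff_subset[OF finO OY])
    moreover have "card ?O \<le> card Y" by (rule card_mono[OF less(2) OY])
    ultimately have "p dvd card ?Y" "card Y = card ?Y + card ?O" by auto
    thus ?thesis using pO by simp
  qed
qed
end

context pgrp begin
lemma fixed_point:
  assumes L: "L \<lhd> G" and A: "A \<lhd> G" and LA: "L \<subseteq> A" "L \<noteq> A"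
  shows "\<exists>a\<in>A. a \<notin> L \<and> (\<forall>g\<in>carrier G. gcomm G a g \<in> L)"
proof (rule ccontr)
  assume no: "\<not> ?thesis"
  interpret Ln: normal L G by (rule L)
  interpret An: normal A G by (rule A)
  let ?E = "{H. H \<subseteq> carrier G}"
  let ?\<phi> = "\<lambda>g. \<lambda>H\<in>?E. g <# H #> inv g"
  interpret act: group_action G ?E ?\<phi> by (rule action_by_conjugation_on_power_set)
  have Lsub: "L \<subseteq> carrier G" by (rule Ln.subset)
  have Asub: "A \<subseteq> carrier G" by (rule An.subset)
  have phi: "?\<phi> g (L #> a) = L #> (g \<otimes> a \<otimes> inv g)" if g: "g \<in> carrier G" and a: "a \<in> carrier G" for g a
  proof -
    have "L #> a \<in> ?E" using r_coset_subset_G[OF Lsub a] by simp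
    hence "?\<phi> g (L #> a) = g <# (L #> a) #> inv g" by simp
    also have "g <# (L #> a) = (g <# L) #> a" using coset_assoc[OF g a Lsub] .
    also have "g <# L = L #> g" using Ln.coset_eq g by simp
    also have "(L #> g) #> a = L #> (g \<otimes> a)" using coset_mult_assoc[OF Lsub g a] .
    also have "(L #> (g \<otimes> a)) #> inv g = L #> (g \<otimes> a \<otimes> inv g)" using coset_mult_assoc[OF Lsub _ inv_closed[OF g]] g a by simp
    finally show ?thesis .
  qed
  let ?X = "(\<lambda>a. L #> a) ` A"
  have XE: "?X \<subseteq> ?E" using r_coset_subset_G[OF Lsub] Asub by auto
  have finA: "finite A" using fin Asub finite_subset by blast
  hence finX: "finite ?X" by simp
  have orbX: "orbit G ?\<phi> (L #> a) = {L #> (g \<otimes> a \<otimes> inv g) | g. g \<in> carrier G}" if a: "a \<in> A" for a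
    unfolding orbit_def using phi a Asub by blast
  have orbXs: "orbit G ?\<phi> (L #> a) \<subseteq> ?X" if a: "a \<in> A" for a
    unfolding orbX[OF a] using An.inv_op_closed2 a by blast
  have L1: "L #> \<one> = L" by (simp add: coset_mult_one Lsub)
  have "L #> \<one> \<in> ?X" using An.one_closed by blast
  hence LX: "L \<in> ?X" using L1 by simp
  have orbL: "orbit G ?\<phi> L = {L}"
  proof -
    have "orbit G ?\<phi> L = {L #> (g \<otimes> \<one> \<otimes> inv g) | g. g \<in> carrier G}" using orbX[OF An.one_closed] L1 by simp
    also have "\<dots> = {L}"
    proof -
      have "\<And>g. g \<in> carrier G \<Longrightarrow> L #> (g \<otimes> \<one> \<otimes> inv g) = L" using L1 by simp
      thus ?thesis using L1 by (auto intro!: exI[of _ \<one>])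
    qed
    finally show ?thesis .
  qed
  let ?Y = "?X - {L}"
  have fixY: "orbit G ?\<phi> y \<noteq> {y}" if y: "y \<in> ?Y" for y
  proof
    assume oy: "orbit G ?\<phi> y = {y}"
    from y obtain a where a: "a \<in> A" and ya: "y = L #> a" and yL: "y \<noteq> L" by blast
    have aG: "a \<in> carrier G" using a Asub by blast
    have aL: "a \<notin> L" using Ln.hc_one_iff[OF aG] ya yL by simp
    have "gcomm G a g \<in> L" if g: "g \<in> carrier G" for g
    proof -
      have "L #> (inv g \<otimes> a \<otimes> inv (inv g)) \<in> orbit G ?\<phi> y" unfolding ya orbX[OF a] using g by blast
      hence e: "L #> (inv g \<otimes> a \<otimes> g) = L #> a" using oy ya g by simp
      have "L #> (a \<otimes> g) = (L #> g) <#> (L #> (inv g \<otimes> a \<otimes> g))" using g aG by (simp add: m_assoc)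
      also have "\<dots> = L #> (g \<otimes> a)" using e g aG by simp
      finally have "(L #> a) <#> (L #> g) = (L #> g) <#> (L #> a)" using g aG by simp
      thus ?thesis using Ln.gcomm_mem_iff[OF aG g] by simp
    qed
    thus False using no a aL by blast
  qed
  have invY: "orbit G ?\<phi> y \<subseteq> ?Y" if y: "y \<in> ?Y" for y
  proof -
    from y obtain a where a: "a \<in> A" and ya: "y = L #> a" by blast
    have "orbit G ?\<phi> y \<subseteq> ?X" using orbXs[OF a] ya by simp
    moreover have "L \<notin> orbit G ?\<phi> y"
    proof
      assume "L \<in> orbit G ?\<phi> y"
      hence "y \<in> orbit G ?\<phi> L" using act.orbit_sym y XE Lsub by blast
      thus False using orbL y by blast
    qed
    ultimately show ?thesis by blast
  qed
  have pY: "p dvd card ?Y"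
    using orbit_count[of ?E ?\<phi> ?Y] action_by_conjugation_on_power_set finX XE fixY invY by blast
  interpret GA: group "G\<lparr>carrier := A\<rparr>" using An.subgroup_axioms subgroup_imp_group by blast
  have LsA: "subgroup L (G\<lparr>carrier := A\<rparr>)" using subgroup_incl Ln.subgroup_axioms An.subgroup_axioms LA(1) by blast
  have rc: "rcosets\<^bsub>G\<lparr>carrier := A\<rparr>\<^esub> L = ?X" by (auto simp: RCOSETS_def r_coset_def)
  have lag: "card ?X * card L = card A" using GA.lagrange[OF LsA] rc by (simp add: order_def)
  obtain i where i: "card A = p ^ i" using sub_card An.subgroup_axioms by blast
  have "card ?X dvd card ?X * card L" by simp
  hence "card ?X dvd p ^ i" using lag i by simp
  then obtain k where k: "card ?X = p ^ k" using divides_primepow_nat[OF prime_p] by blast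
  have "k \<noteq> 0"
  proof
    assume "k = 0"
    hence "card L = card A" using lag k by simp
    hence "L = A" using card_subset_eq[OF finA LA(1)] by simp
    thus False using LA(2) by simp
  qed
  hence pX: "p dvd card ?X" using k by simp
  have "card ?Y = card ?X - 1" using LX finX by simp
  moreover have "card ?X > 0" using LX finX card_gt_0_iff by blast
  ultimately have "card ?X - card ?Y = 1" by simp
  moreover have "p dvd card ?X - card ?Y" using pX pY by (rule dvd_diff_nat)
  ultimately have "p dvd 1" by simp
  thus False using prime_p by simp
qed
end

context pgrp begin
lemma max_L:
  assumes B: "B \<lhd> G" and A: "A \<lhd> G" and BA: "B \<subseteq> A" "B \<noteq> A"
  shows "\<exists>L. L \<lhd> G \<and> B \<subseteq> L \<and> L \<subseteq> A \<and> L \<noteq> A \<and> (\<forall>a\<in>A. \<forall>g\<in>carrier G. gcomm G a g \<in> L)"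
proof -
  interpret An: normal A G by (rule A)
  let ?S = "{L. L \<lhd> G \<and> B \<subseteq> L \<and> L \<subseteq> A \<and> L \<noteq> A}"
  have "?S \<subseteq> Pow (carrier G)" using An.subset by auto
  moreover have "finite (Pow (carrier G))" using fin by simp
  ultimately have finS: "finite ?S" by (rule finite_subset)
  have BS: "B \<in> ?S" using B BA by simp
  let ?m = "Max (card ` ?S)"
  have "?m \<in> card ` ?S" using finS BS by (intro Max_in) auto
  then obtain L where Lm': "?m = card L" and LS: "L \<in> ?S" by (rule imageE)
  have Lm: "card L = ?m" using Lm' by simp
  have maxL: "card L' \<le> card L" if "L' \<in> ?S" for L' using Lm finS that by simp
  have L: "L \<lhd> G" and BL: "B \<subseteq> L" and LA: "L \<subseteq> A" "L \<noteq> A" using LS by auto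
  interpret Ln: normal L G by (rule L)
  obtain a where a: "a \<in> A" "a \<notin> L" and ac: "\<forall>g\<in>carrier G. gcomm G a g \<in> L"
    using fixed_point[OF L A LA] by blast
  let ?L' = "A \<inter> {x \<in> carrier G. \<forall>g\<in>carrier G. gcomm G x g \<in> L}"
  have L'n: "?L' \<lhd> G" using normal_subgroup_intersect[OF A Ln.zeta_normal] .
  have LL': "L \<subseteq> ?L'"
  proof
    fix l assume l: "l \<in> L"
    have lG: "l \<in> carrier G" using l Ln.subset by blast
    have "gcomm G l g \<in> L" if g: "g \<in> carrier G" for g
    proof -
      have "gcomm G l g = inv l \<otimes> (inv g \<otimes> l \<otimes> g)" using lG g by (simp add: gcomm_def m_assoc)
      moreover have "inv g \<otimes> l \<otimes> g \<in> L" using Ln.inv_op_closed1[OF g l] .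
      ultimately show ?thesis using l Ln.m_closed Ln.m_inv_closed by simp
    qed
    thus "l \<in> ?L'" using l LA lG by blast
  qed
  have aL': "a \<in> ?L'" using a ac An.subset by blast
  have "?L' = A"
  proof (rule ccontr)
    assume ne: "?L' \<noteq> A"
    have "?L' \<in> ?S" using L'n BL LL' ne by auto
    hence "card ?L' \<le> card L" by (rule maxL)
    moreover have "L \<subset> ?L'" using LL' aL' a(2) by blast
    moreover have "finite ?L'" using fin finite_subset An.subset by blast
    ultimately show False using psubset_card_mono[of ?L' L] by linarith
  qed
  hence "\<forall>x\<in>A. \<forall>g\<in>carrier G. gcomm G x g \<in> L" by blast
  thus ?thesis using L BL LA by blast
qed

lemma nil_lemma:
  assumes B: "B \<lhd> G" and A: "A \<lhd> G" and BA: "B \<subseteq> A"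
    and H: "\<And>L. L \<lhd> G \<Longrightarrow> B \<subseteq> L \<Longrightarrow> (\<forall>a\<in>A. \<forall>g\<in>carrier G. gcomm G a g \<in> L) \<Longrightarrow> A \<subseteq> L"
  shows "A = B"
proof (rule ccontr)
  assume "A \<noteq> B"
  hence "B \<noteq> A" by blast
  from max_L[OF B A BA this] obtain L where L: "L \<lhd> G \<and> B \<subseteq> L \<and> L \<subseteq> A \<and> L \<noteq> A \<and> (\<forall>a\<in>A. \<forall>g\<in>carrier G. gcomm G a g \<in> L)"
    by blast
  hence "A \<subseteq> L" using H by blast
  thus False using L by blast
qed
end

lemma (in group) sub_pow_closed: "subgroup H G \<Longrightarrow> x \<in> H \<Longrightarrow> x [^] (k::nat) \<in> H"
proof (induction k)
  case 0 then show ?case by (simp add: subgroup.one_closed)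
next
  case (Suc k) then show ?case by (simp add: subgroup.m_closed)
qed

lemma (in group) gcomm_normal_closed: "N \<lhd> G \<Longrightarrow> n \<in> N \<Longrightarrow> g \<in> carrier G \<Longrightarrow> gcomm G n g \<in> N"
proof -
  assume N: "N \<lhd> G" and n: "n \<in> N" and g: "g \<in> carrier G"
  interpret Nn: normal N G by (rule N)
  have nG: "n \<in> carrier G" using n Nn.subset by blast
  have "gcomm G n g = inv n \<otimes> (inv g \<otimes> n \<otimes> g)" using nG g by (simp add: gcomm_def m_assoc)
  moreover have "inv g \<otimes> n \<otimes> g \<in> N" using Nn.inv_op_closed1[OF g n] .
  ultimately show ?thesis using n Nn.m_closed Nn.m_inv_closed by simp
qed

lemma (in group) normal_gen_conj:
  assumes "S \<subseteq> carrier G" "\<And>s g. s \<in> S \<Longrightarrow> g \<in> carrier G \<Longrightarrow> g \<otimes> s \<otimes> inv g \<in> S"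
  shows "generate G S \<lhd> G"
  using normal_generateI assms by blast

locale qp = pgrp +
  fixes Z N M
  assumes odd_p: "odd p"
  and Z_def: "Z = center G"
  and N_def: "N = pth_powers G p"
  and M_def: "M = generate G {x [^] p | x. x \<in> N}"
  and H0: "\<And>x y. x \<in> carrier G \<Longrightarrow> y \<in> carrier G \<Longrightarrow> \<exists>n\<in>N. \<exists>z\<in>Z. gcomm G x y = n \<otimes> z"
begin

lemma Z_central: "z \<in> Z \<Longrightarrow> g \<in> carrier G \<Longrightarrow> z \<otimes> g = g \<otimes> z"
  unfolding Z_def center_def by blast

lemma Z_sub: "Z \<subseteq> carrier G" unfolding Z_def center_def by blast

lemma Z_normal: "Z \<lhd> G"
proof -
  have sub: "subgroup Z G"
  proof (rule subgroupI)
    show "Z \<subseteq> carrier G" by (rule Z_sub)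
    have "\<one> \<in> Z" unfolding Z_def center_def by simp
    thus "Z \<noteq> {}" by blast
  next
    fix z assume z: "z \<in> Z"
    have zG: "z \<in> carrier G" using z Z_sub by blast
    have "inv z \<otimes> g = g \<otimes> inv z" if g: "g \<in> carrier G" for g
      using commute_inv[OF zG g Z_central[OF z g]] .
    thus "inv z \<in> Z" using zG unfolding Z_def center_def by simp
  next
    fix z1 z2 assume z1: "z1 \<in> Z" and z2: "z2 \<in> Z"
    have zG: "z1 \<in> carrier G" "z2 \<in> carrier G" using z1 z2 Z_sub by auto
    have "(z1 \<otimes> z2) \<otimes> g = g \<otimes> (z1 \<otimes> z2)" if g: "g \<in> carrier G" for g
      using commute_mult[OF zG g Z_central[OF z1 g] Z_central[OF z2 g]] .
    thus "z1 \<otimes> z2 \<in> Z" using zG unfolding Z_def center_def by simp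
  qed
  show ?thesis unfolding normal_inv_iff
  proof (intro conjI sub ballI)
    fix x z assume x: "x \<in> carrier G" and z: "z \<in> Z"
    have zG: "z \<in> carrier G" using z Z_sub by blast
    show "x \<otimes> z \<otimes> inv x \<in> Z" using commute_conj[OF zG x Z_central[OF z x]] z by simp
  qed
qed

lemma N_normal: "N \<lhd> G"
  unfolding N_def pth_powers_def
proof (rule normal_gen_conj)
  show "{g [^] p |g. g \<in> carrier G} \<subseteq> carrier G" by auto
  fix s g assume s: "s \<in> {g [^] p |g. g \<in> carrier G}" and g: "g \<in> carrier G"
  then obtain x where x: "x \<in> carrier G" "s = x [^] p" by blast
  have "g \<otimes> s \<otimes> inv g = (g \<otimes> x \<otimes> inv g) [^] p" using conj_pow[OF x(1) g] x by simp
  thus "g \<otimes> s \<otimes> inv g \<in> {g [^] p |g. g \<in> carrier G}" using x g by blast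
qed

lemma N_sub: "N \<subseteq> carrier G" using subgroup.subset[OF normal_imp_subgroup[OF N_normal]] .

lemma M_normal: "M \<lhd> G"
  unfolding M_def
proof (rule normal_gen_conj)
  show "{x [^] p |x. x \<in> N} \<subseteq> carrier G" using N_sub by auto
  fix s g assume s: "s \<in> {x [^] p |x. x \<in> N}" and g: "g \<in> carrier G"
  then obtain x where x: "x \<in> N" "s = x [^] p" by blast
  have xG: "x \<in> carrier G" using x N_sub by blast
  have "g \<otimes> s \<otimes> inv g = (g \<otimes> x \<otimes> inv g) [^] p" using conj_pow[OF xG g] x by simp
  moreover have "g \<otimes> x \<otimes> inv g \<in> N" using normal.inv_op_closed2[OF N_normal g x(1)] .
  ultimately show "g \<otimes> s \<otimes> inv g \<in> {x [^] p |x. x \<in> N}" by blast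
qed

lemma M_pow: "x \<in> N \<Longrightarrow> x [^] p \<in> M"
  unfolding M_def by (rule generate.incl) blast

definition "Bs = generate G (M \<union> Z)"
definition "As = generate G ({gcomm G n g | n g. n \<in> N \<and> g \<in> carrier G} \<union> Bs)"

lemma B_normal: "Bs \<lhd> G"
  unfolding Bs_def
proof (rule normal_gen_conj)
  show "M \<union> Z \<subseteq> carrier G" using Z_sub subgroup.subset[OF normal_imp_subgroup[OF M_normal]] by blast
  fix s g assume s: "s \<in> M \<union> Z" and g: "g \<in> carrier G"
  show "g \<otimes> s \<otimes> inv g \<in> M \<union> Z"
  proof (cases "s \<in> M")
    case True thus ?thesis using normal.inv_op_closed2[OF M_normal g] by blast
  next
    case False hence "s \<in> Z" using s by blast
    thus ?thesis using normal.inv_op_closed2[OF Z_normal g] by blast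
  qed
qed

lemma B_sub: "Bs \<subseteq> carrier G" using subgroup.subset[OF normal_imp_subgroup[OF B_normal]] .

lemma A_normal: "As \<lhd> G"
  unfolding As_def
proof (rule normal_gen_conj)
  show "{gcomm G n g | n g. n \<in> N \<and> g \<in> carrier G} \<union> Bs \<subseteq> carrier G" using B_sub N_sub by auto
  fix s g assume s: "s \<in> {gcomm G n g | n g. n \<in> N \<and> g \<in> carrier G} \<union> Bs" and g: "g \<in> carrier G"
  show "g \<otimes> s \<otimes> inv g \<in> {gcomm G n g | n g. n \<in> N \<and> g \<in> carrier G} \<union> Bs"
  proof (cases "s \<in> Bs")
    case True thus ?thesis using normal.inv_op_closed2[OF B_normal g] by blast
  next
    case False
    then obtain n h where nh: "n \<in> N" "h \<in> carrier G" "s = gcomm G n h" using s by blast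
    have nG: "n \<in> carrier G" using nh N_sub by blast
    have "g \<otimes> s \<otimes> inv g = gcomm G (g \<otimes> n \<otimes> inv g) (g \<otimes> h \<otimes> inv g)" using gcomm_conj[OF nG nh(2) g] nh by simp
    moreover have "g \<otimes> n \<otimes> inv g \<in> N" using normal.inv_op_closed2[OF N_normal g nh(1)] .
    moreover have "g \<otimes> h \<otimes> inv g \<in> carrier G" using g nh by simp
    ultimately show ?thesis by blast
  qed
qed

lemma BA: "Bs \<subseteq> As"
  unfolding As_def by (auto intro: generate.incl)
end

lemma sum_lt_twice: "(\<Sum>i<k. i) * 2 = k * (k - 1::nat)"
proof (induction k)
  case 0 then show ?case by simp
next
  case (Suc k) then show ?case by (cases k) (simp_all add: algebra_simps)
qed

lemma (in normal) conj_fix_gcomm: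
  assumes a: "a \<in> carrier G" and g: "g \<in> carrier G" and e: "H #> (inv g \<otimes> a \<otimes> g) = H #> a"
  shows "gcomm G a g \<in> H"
proof -
  have "H #> (a \<otimes> g) = (H #> g) <#> (H #> (inv g \<otimes> a \<otimes> g))" using g a by (simp add: m_assoc)
  also have "\<dots> = H #> (g \<otimes> a)" using e g a by simp
  finally have "(H #> a) <#> (H #> g) = (H #> g) <#> (H #> a)" using g a by simp
  thus ?thesis using gcomm_mem_iff[OF a g] by simp
qed

context qp begin

lemma gcomm_central: assumes n: "u \<in> carrier G" and z: "z \<in> Z" and x: "x \<in> carrier G"
  shows "gcomm G (u \<otimes> z) x = gcomm G u x"
proof -
  have zG: "z \<in> carrier G" using z Z_sub by blast
  let ?w = "inv u \<otimes> inv x \<otimes> u"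
  have wG: "?w \<in> carrier G" using n x by simp
  have "gcomm G (u \<otimes> z) x = inv z \<otimes> (?w \<otimes> z) \<otimes> x" using n x zG by (simp add: gcomm_def inv_mult_group m_assoc)
  also have "?w \<otimes> z = z \<otimes> ?w" using Z_central[OF z wG] by simp
  also have "inv z \<otimes> (z \<otimes> ?w) \<otimes> x = gcomm G u x" using n x zG by (simp add: gcomm_def m_assoc)
  finally show ?thesis .
qed

lemma step3_core:
  assumes K: "K \<lhd> G" and BK: "Bs \<subseteq> K" and AK: "\<forall>a\<in>As. \<forall>g\<in>carrier G. gcomm G a g \<in> K"
    and x: "x \<in> carrier G" and g: "g \<in> carrier G"
  shows "gcomm G (x [^] p) g \<in> K"
proof -
  interpret Kn: normal K G by (rule K)
  interpret Q: group "G Mod K" by (rule Kn.factorgroup_is_group)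
  define y where "y = gcomm G x g"
  have yG: "y \<in> carrier G" using x g y_def by simp
  obtain n0 z where n0: "n0 \<in> N" and z: "z \<in> Z" and yd: "y = n0 \<otimes> z" using H0[OF x g] y_def by blast
  have n0G: "n0 \<in> carrier G" using n0 N_sub by blast
  have zG: "z \<in> carrier G" using z Z_sub by blast
  define c where "c = gcomm G y x"
  have cG: "c \<in> carrier G" using c_def x yG by simp
  have cn: "c = gcomm G n0 x" using c_def yd gcomm_central[OF n0G z x] by simp
  have cA: "c \<in> As" unfolding As_def cn using n0 x by (intro generate.incl) blast
  have cx: "(K #> c) <#> (K #> x) = (K #> x) <#> (K #> c)"
  proof -
    have "gcomm G c x \<in> K" using AK cA x by blast
    thus ?thesis using Kn.gcomm_mem_iff[OF cG x] by simp
  qed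
  have cy: "(K #> c) <#> (K #> y) = (K #> y) <#> (K #> c)"
  proof -
    have "gcomm G c y \<in> K" using AK cA yG by blast
    thus ?thesis using Kn.gcomm_mem_iff[OF cG yG] by simp
  qed
  have "y \<otimes> x = x \<otimes> y \<otimes> c" using x yG by (simp add: c_def gcomm_def m_assoc)
  hence yx: "(K #> y) <#> (K #> x) = (K #> x) <#> (K #> y) <#> (K #> c)" using x yG cG by simp
  have col: "K #> ((x \<otimes> y) [^] p) = K #> (x [^] p \<otimes> y [^] p \<otimes> c [^] (\<Sum>i<p. i))"
    using Q.collect[of "K #> x" "K #> y" "K #> c" p] yx cx cy x yG cG by simp
  have "y [^] p = n0 [^] p \<otimes> z [^] p" unfolding yd using pow_mult_distrib[OF Z_central[OF z n0G, symmetric] n0G zG] .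
  moreover have "n0 [^] p \<in> K" using M_pow[OF n0] BK unfolding Bs_def by (blast intro: generate.incl)
  moreover have "z [^] p \<in> K" using sub_pow_closed[OF normal_imp_subgroup[OF Z_normal] z] BK unfolding Bs_def by (blast intro: generate.incl)
  ultimately have ypK: "y [^] p \<in> K" using Kn.m_closed by simp
  have cN: "c \<in> N" unfolding cn using gcomm_normal_closed[OF N_normal n0 x] .
  obtain m where pm: "p = 2 * m + 1" using odd_p oddE by blast
  have "(\<Sum>i<p. i) * 2 = p * (2 * m)" using sum_lt_twice[of p] pm by simp
  hence s: "(\<Sum>i<p. i) = p * m" by simp
  have "c [^] (\<Sum>i<p. i) = (c [^] p) [^] m" unfolding s using cG by (simp add: nat_pow_pow)
  moreover have "c [^] p \<in> K" using M_pow[OF cN] BK unfolding Bs_def by (blast intro: generate.incl)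
  ultimately have csK: "c [^] (\<Sum>i<p. i) \<in> K" using sub_pow_closed[OF Kn.subgroup_axioms] by simp
  have "x [^] p \<otimes> y [^] p \<otimes> c [^] (\<Sum>i<p. i) \<otimes> inv (x [^] p) = x [^] p \<otimes> (y [^] p \<otimes> c [^] (\<Sum>i<p. i)) \<otimes> inv (x [^] p)"
    using x yG cG by (simp add: m_assoc)
  moreover have "y [^] p \<otimes> c [^] (\<Sum>i<p. i) \<in> K" using ypK csK Kn.m_closed by simp
  ultimately have "x [^] p \<otimes> y [^] p \<otimes> c [^] (\<Sum>i<p. i) \<otimes> inv (x [^] p) \<in> K"
    using Kn.inv_op_closed2[of "x [^] p"] x by simp
  hence "K #> (x [^] p \<otimes> y [^] p \<otimes> c [^] (\<Sum>i<p. i)) = K #> (x [^] p)"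
    using Kn.hc_eq_iff x yG cG by simp
  moreover have "x \<otimes> y = inv g \<otimes> x \<otimes> g" using x g by (simp add: y_def gcomm_def m_assoc)
  moreover have "(inv g \<otimes> x \<otimes> g) [^] p = inv g \<otimes> x [^] p \<otimes> g" using conj_pow[OF x inv_closed[OF g]] g by simp
  ultimately have "K #> (inv g \<otimes> x [^] p \<otimes> g) = K #> (x [^] p)" using col by simp
  thus ?thesis using Kn.conj_fix_gcomm x g by simp
qed
end

context qp begin

lemma step3:
  assumes K: "K \<lhd> G" and BK: "Bs \<subseteq> K" and AK: "\<forall>a\<in>As. \<forall>g\<in>carrier G. gcomm G a g \<in> K"
  shows "As \<subseteq> K"
proof -
  interpret Kn: normal K G by (rule K)
  have gen: "gcomm G u g \<in> K" if u: "u \<in> N" and g: "g \<in> carrier G" for u g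
  proof -
    have "N \<subseteq> {a \<in> carrier G. gcomm G a g \<in> K}"
      unfolding N_def pth_powers_def
      by (rule generate_subgroup_incl[OF _ Kn.cent_subgroup[OF g]]) (use step3_core[OF K BK AK _ g] in auto)
    thus ?thesis using u by blast
  qed
  show ?thesis
    unfolding As_def
    by (rule generate_subgroup_incl[OF _ Kn.subgroup_axioms]) (use gen BK in auto)
qed

lemma AB: "As = Bs"
  by (rule nil_lemma[OF B_normal A_normal BA step3])

lemma PE: "u \<in> N \<Longrightarrow> g \<in> carrier G \<Longrightarrow> gcomm G u g \<in> Bs"
  using AB unfolding As_def by (blast intro: generate.incl)

lemma B_central_mod_M: "c \<in> Bs \<Longrightarrow> g \<in> carrier G \<Longrightarrow> gcomm G c g \<in> M"
proof -
  assume c: "c \<in> Bs" and g: "g \<in> carrier G"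
  interpret Mn: normal M G by (rule M_normal)
  have "Bs \<subseteq> {a \<in> carrier G. \<forall>g\<in>carrier G. gcomm G a g \<in> M}"
    unfolding Bs_def
  proof (rule generate_subgroup_incl[OF _ normal_imp_subgroup[OF Mn.zeta_normal]], rule subsetI)
    fix s assume s: "s \<in> M \<union> Z"
    show "s \<in> {a \<in> carrier G. \<forall>g\<in>carrier G. gcomm G a g \<in> M}"
    proof (cases "s \<in> M")
      case True
      thus ?thesis using gcomm_normal_closed[OF M_normal True] Mn.subset by blast
    next
      case False
      hence z: "s \<in> Z" using s by blast
      have sG: "s \<in> carrier G" using z Z_sub by blast
      have "gcomm G s h = \<one>" if h: "h \<in> carrier G" for h
        using commute_iff_gcomm[OF sG h] Z_central[OF z h] by simp
      thus ?thesis using sG Mn.one_closed by simp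
    qed
  qed
  thus ?thesis using c g by blast
qed

lemma step4a: assumes a: "a \<in> N" and g: "g \<in> carrier G" shows "gcomm G a (g [^] p) \<in> M"
proof -
  interpret Mn: normal M G by (rule M_normal)
  interpret Q: group "G Mod M" by (rule Mn.factorgroup_is_group)
  have aG: "a \<in> carrier G" using a N_sub by blast
  define c where "c = gcomm G a g"
  have cG: "c \<in> carrier G" using aG g c_def by simp
  have cB: "c \<in> Bs" using PE[OF a g] c_def by simp
  have cN: "c \<in> N" using gcomm_normal_closed[OF N_normal a g] c_def by simp
  have "inv g \<otimes> a \<otimes> g = a \<otimes> c" using aG g by (simp add: c_def gcomm_def m_assoc)
  hence e: "inv\<^bsub>G Mod M\<^esub> (M #> g) \<otimes>\<^bsub>G Mod M\<^esub> (M #> a) \<otimes>\<^bsub>G Mod M\<^esub> (M #> g) = (M #> a) \<otimes>\<^bsub>G Mod M\<^esub> (M #> c)"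
    using aG g cG by simp
  have ca: "(M #> c) \<otimes>\<^bsub>G Mod M\<^esub> (M #> a) = (M #> a) \<otimes>\<^bsub>G Mod M\<^esub> (M #> c)"
    using Mn.gcomm_mem_iff[OF cG aG] B_central_mod_M[OF cB aG] by simp
  have cg: "(M #> c) \<otimes>\<^bsub>G Mod M\<^esub> (M #> g) = (M #> g) \<otimes>\<^bsub>G Mod M\<^esub> (M #> c)"
    using Mn.gcomm_mem_iff[OF cG g] B_central_mod_M[OF cB g] by simp
  have "M #> (inv (g [^] p) \<otimes> a \<otimes> g [^] p) = M #> (a \<otimes> c [^] p)"
    using Q.conj_iter[of "M #> a" "M #> g" "M #> c" p, OF _ _ _ e ca cg] aG g cG by simp
  moreover have "M #> (a \<otimes> c [^] p) = M #> a"
  proof -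
    have "a \<otimes> c [^] p \<otimes> inv a \<in> M" using Mn.inv_op_closed2[OF aG M_pow[OF cN]] .
    thus ?thesis using Mn.hc_eq_iff aG cG by simp
  qed
  ultimately have "M #> (inv (g [^] p) \<otimes> a \<otimes> g [^] p) = M #> a" by simp
  thus ?thesis using Mn.conj_fix_gcomm aG g by simp
qed

lemma step4: assumes a: "a \<in> N" and b: "b \<in> N" shows "gcomm G a b \<in> M"
proof -
  interpret Mn: normal M G by (rule M_normal)
  have aG: "a \<in> carrier G" using a N_sub by blast
  have "N \<subseteq> {b \<in> carrier G. gcomm G b a \<in> M}"
    unfolding N_def pth_powers_def
  proof (rule generate_subgroup_incl[OF _ Mn.cent_subgroup[OF aG]], rule subsetI)
    fix s assume "s \<in> {g [^] p |g. g \<in> carrier G}"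
    then obtain g where g: "g \<in> carrier G" "s = g [^] p" by blast
    have "gcomm G a s \<in> M" using step4a[OF a g(1)] g by simp
    thus "s \<in> {b \<in> carrier G. gcomm G b a \<in> M}" using Mn.gcomm_mem_sym[OF aG] g by simp
  qed
  hence "gcomm G b a \<in> M" using b by blast
  thus ?thesis using Mn.gcomm_mem_sym[OF aG] b N_sub by blast
qed

lemma final: "powerful (G\<lparr>carrier := N\<rparr>) p"
proof -
  have Nsg: "subgroup N G" using normal_imp_subgroup[OF N_normal] .
  interpret Mn: normal M G by (rule M_normal)
  have "{g [^]\<^bsub>G\<lparr>carrier := N\<rparr>\<^esub> p | g. g \<in> carrier (G\<lparr>carrier := N\<rparr>)} = {x [^] p | x. x \<in> N}"
    using nat_pow_consistent by simp
  moreover have "{x [^] p | x. x \<in> N} \<subseteq> N" using sub_pow_closed[OF Nsg] by blast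
  ultimately have pp: "pth_powers (G\<lparr>carrier := N\<rparr>) p = M"
    unfolding pth_powers_def M_def using generate_consistent[OF _ Nsg] by simp
  have der: "derived (G\<lparr>carrier := N\<rparr>) (carrier (G\<lparr>carrier := N\<rparr>)) = derived G N"
    using derived_consistent[OF subset_refl Nsg] by simp
  have "derived G N \<subseteq> M"
    unfolding derived_def
  proof (rule generate_subgroup_incl[OF _ Mn.subgroup_axioms], rule subsetI)
    fix s assume "s \<in> derived_set G N"
    then obtain h1 h2 where h: "h1 \<in> N" "h2 \<in> N" "s = h1 \<otimes> h2 \<otimes> inv h1 \<otimes> inv h2" by blast
    have hG: "h1 \<in> carrier G" "h2 \<in> carrier G" using h N_sub by auto
    have "s = gcomm G (inv h1) (inv h2)" using h hG by (simp add: gcomm_def)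
    moreover have "inv h1 \<in> N" "inv h2 \<in> N" using h subgroup.m_inv_closed[OF Nsg] by auto
    ultimately show "s \<in> M" using step4 by simp
  qed
  thus ?thesis unfolding powerful_def pp der .
qed
end

lemma (in group) center_normal: "center G \<lhd> G"
proof -
  let ?Z = "center G"
  have Zc: "z \<otimes> g = g \<otimes> z" if "z \<in> ?Z" "g \<in> carrier G" for z g using that unfolding center_def by blast
  have Zs: "?Z \<subseteq> carrier G" unfolding center_def by blast
  have sub: "subgroup ?Z G"
  proof (rule subgroupI)
    show "?Z \<subseteq> carrier G" by (rule Zs)
    have "\<one> \<in> ?Z" unfolding center_def by simp
    thus "?Z \<noteq> {}" by blast
  next
    fix z assume z: "z \<in> ?Z"
    have zG: "z \<in> carrier G" using z Zs by blast
    have "inv z \<otimes> g = g \<otimes> inv z" if g: "g \<in> carrier G" for g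
      using commute_inv[OF zG g Zc[OF z g]] .
    thus "inv z \<in> ?Z" using zG unfolding center_def by simp
  next
    fix z1 z2 assume z1: "z1 \<in> ?Z" and z2: "z2 \<in> ?Z"
    have zG: "z1 \<in> carrier G" "z2 \<in> carrier G" using z1 z2 Zs by auto
    have "(z1 \<otimes> z2) \<otimes> g = g \<otimes> (z1 \<otimes> z2)" if g: "g \<in> carrier G" for g
      using commute_mult[OF zG g Zc[OF z1 g] Zc[OF z2 g]] .
    thus "z1 \<otimes> z2 \<in> ?Z" using zG unfolding center_def by simp
  qed
  show ?thesis unfolding normal_inv_iff
  proof (intro conjI sub ballI)
    fix x z assume x: "x \<in> carrier G" and z: "z \<in> ?Z"
    have zG: "z \<in> carrier G" using z Zs by blast
    show "x \<otimes> z \<otimes> inv x \<in> ?Z" using commute_conj[OF zG x Zc[OF z x]] z by simp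
  qed
qed

lemma (in group) H0_from_qp:
  assumes qpw: "quasi_powerful G p" and x: "x \<in> carrier G" and y: "y \<in> carrier G"
  shows "\<exists>u\<in>pth_powers G p. \<exists>z\<in>center G. gcomm G x y = u \<otimes> z"
proof -
  let ?Z = "center G"
  interpret Zn: normal ?Z G by (rule center_normal)
  let ?h = "\<lambda>a. ?Z #> a"
  have gh: "group_hom G (G Mod ?Z) ?h"
    unfolding group_hom_def group_hom_axioms_def
    using is_group Zn.factorgroup_is_group Zn.r_coset_hom_Mod by blast
  interpret gh: group_hom G "G Mod ?Z" ?h by (rule gh)
  have car: "carrier (G Mod ?Z) = ?h ` carrier G" by (rule carrier_FactGroup)
  have der: "derived (G Mod ?Z) (carrier (G Mod ?Z)) = ?h ` derived G (carrier G)"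
    unfolding car by (rule gh.derived_img) simp
  have "{C [^]\<^bsub>G Mod ?Z\<^esub> p | C. C \<in> carrier (G Mod ?Z)} = ?h ` {g [^] p | g. g \<in> carrier G}"
  proof (rule equalityI; rule subsetI)
    fix w assume "w \<in> {C [^]\<^bsub>G Mod ?Z\<^esub> p | C. C \<in> carrier (G Mod ?Z)}"
    then obtain g where g: "g \<in> carrier G" "w = (?Z #> g) [^]\<^bsub>G Mod ?Z\<^esub> p" unfolding car by blast
    hence "w = ?Z #> (g [^] p)" by simp
    thus "w \<in> ?h ` {g [^] p | g. g \<in> carrier G}" using g by blast
  next
    fix w assume "w \<in> ?h ` {g [^] p | g. g \<in> carrier G}"
    then obtain g where g: "g \<in> carrier G" "w = ?Z #> (g [^] p)" by blast
    hence "w = (?Z #> g) [^]\<^bsub>G Mod ?Z\<^esub> p" by simp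
    thus "w \<in> {C [^]\<^bsub>G Mod ?Z\<^esub> p | C. C \<in> carrier (G Mod ?Z)}" using g unfolding car by blast
  qed
  hence pp: "pth_powers (G Mod ?Z) p = ?h ` pth_powers G p"
    unfolding pth_powers_def using gh.generate_img[of "{g [^] p | g. g \<in> carrier G}"] by auto
  let ?s = "inv x \<otimes> inv y \<otimes> inv (inv x) \<otimes> inv (inv y)"
  have "?s \<in> derived_set G (carrier G)" using x y by blast
  hence "?s \<in> derived G (carrier G)" unfolding derived_def by (rule generate.incl)
  hence "?h ?s \<in> ?h ` pth_powers G p" using qpw unfolding quasi_powerful_def powerful_def der pp by blast
  then obtain u where u: "u \<in> pth_powers G p" and e: "?h ?s = ?h u" by blast
  have uG: "u \<in> carrier G" using u unfolding pth_powers_def using generate_in_carrier[of "{g [^] p | g. g \<in> carrier G}"] by auto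
  have sG: "?s \<in> carrier G" using x y by simp
  have zz: "?s \<otimes> inv u \<in> ?Z" using Zn.hc_eq_iff[OF sG uG] e by simp
  have "?s = (?s \<otimes> inv u) \<otimes> u" using sG uG by (simp add: m_assoc)
  also have "\<dots> = u \<otimes> (?s \<otimes> inv u)" using zz uG unfolding center_def by blast
  finally have "gcomm G x y = u \<otimes> (?s \<otimes> inv u)" using x y by (simp add: gcomm_def)
  thus ?thesis using u zz by blast
qed

theorem theorem4p9:
  fixes G :: "('a, 'b) monoid_scheme" and p :: nat
  assumes "Factorial_Ring.prime p" and "odd p"
    and "p_group G p"
    and "quasi_powerful G p"
  shows "powerful (G\<lparr>carrier := pth_powers G p\<rparr>) p"
proof -
  from assms(3) obtain n where grp: "group G" and fin: "finite (carrier G)" and ord: "order G = p ^ n"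
    unfolding p_group_def by blast
  interpret group G by (rule grp)
  interpret qp G p n "center G" "pth_powers G p" "generate G {x [^]\<^bsub>G\<^esub> p | x. x \<in> pth_powers G p}"
  proof (unfold_locales)
    show "Factorial_Ring.prime p" by (rule assms(1))
    show "finite (carrier G)" by (rule fin)
    show "order G = p ^ n" by (rule ord)
    show "odd p" by (rule assms(2))
    fix x y assume "x \<in> carrier G" "y \<in> carrier G"
    thus "\<exists>u\<in>pth_powers G p. \<exists>z\<in>center G. gcomm G x y = u \<otimes>\<^bsub>G\<^esub> z" using H0_from_qp[OF assms(4)] by blast
  qed simp_all
  show ?thesis by (rule final)
qed

end
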